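(* Let $A$ be a finite set of vertices of a graph $\Gamma$. Then there exists a subset $B\subseteq A$ with $|B|\le\tfrac34|A|$ such that $$\operatorname{sw}(A)\le\operatorname{Bisec}(A)+\operatorname{sw}(B).$$
   Context: For disjoint vertex sets $B_1,B_2$, $E(B_1,B_2)$ is the set of edges between them. A sweepout $\mathfrak F$ of a finite vertex set $A$ is a nested sequence $\emptyset=F_0\subseteq F_1\subseteq\dots\subseteq F_{|A|}=A$ with $|F_j|=j$; its width is $\operatorname{w}(\mathfrak F)=\max_j|E(F_j,A\setminus F_j)|$, and $\operatorname{sw}(A)$ is the minimum width over all sweepouts of $A$. $\operatorname{Bisec}(A)=\min|E(B_1,B_2)|$ over all decompositions $A=B_1\sqcup B_2$ with $\tfrac14|A|\le|B_i|\le\tfrac34|A|$ for $i=1,2$ (a minimum over an empty set being $+\infty$). *)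

theory Defs
  imports Complex_Main "HOL-Library.Extended_Nat"
begin

definition edges_between :: "('a \<Rightarrow> 'a \<Rightarrow> bool) \<Rightarrow> 'a set \<Rightarrow> 'a set \<Rightarrow> 'a set set" where
  "edges_between E B1 B2 = {{u, v} | u v. u \<in> B1 \<and> v \<in> B2 \<and> E u v}"

definition sweepout :: "'a set \<Rightarrow> (nat \<Rightarrow> 'a set) \<Rightarrow> bool" where
  "sweepout A F \<longleftrightarrow> F 0 = {} \<and> F (card A) = A \<and>
     (\<forall>j < card A. F j \<subseteq> F (Suc j)) \<and> (\<forall>j \<le> card A. card (F j) = j)"

definition width :: "('a \<Rightarrow> 'a \<Rightarrow> bool) \<Rightarrow> 'a set \<Rightarrow> (nat \<Rightarrow> 'a set) \<Rightarrow> nat" where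
  "width E A F = Max ((\<lambda>j. card (edges_between E (F j) (A - F j))) ` {0..card A})"

definition sw :: "('a \<Rightarrow> 'a \<Rightarrow> bool) \<Rightarrow> 'a set \<Rightarrow> nat" where
  "sw E A = (LEAST w. \<exists>F. sweepout A F \<and> width E A F = w)"

definition Bisec :: "('a \<Rightarrow> 'a \<Rightarrow> bool) \<Rightarrow> 'a set \<Rightarrow> enat" where
  "Bisec E A = (INF P \<in> {(B1, B2). B1 \<union> B2 = A \<and> B1 \<inter> B2 = {} \<and>
        real (card A) / 4 \<le> real (card B1) \<and> real (card B1) \<le> 3 * real (card A) / 4 \<and>
        real (card A) / 4 \<le> real (card B2) \<and> real (card B2) \<le> 3 * real (card A) / 4}.
      enat (card (edges_between E (fst P) (snd P))))"

end

theory Submission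
  imports Defs
begin

lemma sweepout_exists: "finite A \<Longrightarrow> \<exists>F. sweepout A F"
proof -
  assume "finite A"
  then obtain xs where xs: "set xs = A" "distinct xs" using finite_distinct_list by blast
  then have c: "card A = length xs" using distinct_card by blast
  have "sweepout A (\<lambda>j. set (take j xs))"
    unfolding sweepout_def c
    using xs by (auto simp: set_take_subset_set_take distinct_card min_def)
  then show ?thesis by blast
qed

lemma sw_attained: "finite A \<Longrightarrow> \<exists>F. sweepout A F \<and> width E A F = sw E A"
proof -
  assume "finite A"
  then obtain F where "sweepout A F" using sweepout_exists by blast
  then have "\<exists>w. \<exists>F. sweepout A F \<and> width E A F = w" by blast
  then show ?thesis unfolding sw_def by (rule LeastI_ex)
qed

lemma sw_le: "sweepout A F \<Longrightarrow> sw E A \<le> width E A F"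
  unfolding sw_def by (rule Least_le) blast

lemma width_ge: "j \<le> card A \<Longrightarrow> card (edges_between E (F j) (A - F j)) \<le> width E A F"
  unfolding width_def by (rule Max_ge) auto

lemma width_le: "(\<And>j. j \<le> card A \<Longrightarrow> card (edges_between E (F j) (A - F j)) \<le> b) \<Longrightarrow> width E A F \<le> b"
  unfolding width_def by (subst Max_le_iff) auto

lemma sweepout_mono: "sweepout A F \<Longrightarrow> j \<le> card A \<Longrightarrow> i \<le> j \<Longrightarrow> F i \<subseteq> F j"
proof (induction j)
  case 0 then show ?case by simp
next
  case (Suc j)
  show ?case
  proof (cases "i = Suc j")
    case False
    then have "F i \<subseteq> F j" using Suc by simp
    moreover have "F j \<subseteq> F (Suc j)" using Suc.prems unfolding sweepout_def by simp
    ultimately show ?thesis by blast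
  qed simp
qed

lemma sweepout_sub: "sweepout A F \<Longrightarrow> j \<le> card A \<Longrightarrow> F j \<subseteq> A"
  using sweepout_mono[of A F "card A" j] unfolding sweepout_def by simp

lemma edges_finite: "finite X \<Longrightarrow> finite Y \<Longrightarrow> finite (edges_between E X Y)"
proof -
  assume "finite X" "finite Y"
  have "edges_between E X Y \<subseteq> (\<lambda>(u,v). {u,v}) ` (X \<times> Y)"
    unfolding edges_between_def by auto
  then show ?thesis using \<open>finite X\<close> \<open>finite Y\<close> by (meson finite_SigmaI finite_imageI finite_subset)
qed

lemma edges_Un2: "edges_between E X (Y \<union> Z) = edges_between E X Y \<union> edges_between E X Z"
  unfolding edges_between_def by blast

lemma edges_Un1: "edges_between E (X \<union> Y) Z = edges_between E X Z \<union> edges_between E Y Z"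
  unfolding edges_between_def by blast

lemma edges_mono: "X \<subseteq> X' \<Longrightarrow> Y \<subseteq> Y' \<Longrightarrow> edges_between E X Y \<subseteq> edges_between E X' Y'"
  unfolding edges_between_def by blast

lemma combine:
  assumes fin: "finite A" and U: "B1 \<union> B2 = A" and D: "B1 \<inter> B2 = {}"
  shows "sw E A \<le> card (edges_between E B1 B2) + max (sw E B1) (sw E B2)"
proof -
  have f1: "finite B1" and f2: "finite B2" using fin U by auto
  obtain F1 where F1: "sweepout B1 F1" "width E B1 F1 = sw E B1" using sw_attained[OF f1] by blast
  obtain F2 where F2: "sweepout B2 F2" "width E B2 F2 = sw E B2" using sw_attained[OF f2] by blast
  define n1 where "n1 = card B1"
  define n2 where "n2 = card B2"
  have cA: "card A = n1 + n2" unfolding n1_def n2_def using U D f1 f2 card_Un_disjoint by blast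
  define F where "F j = (if j \<le> n1 then F1 j else B1 \<union> F2 (j - n1))" for j
  let ?c = "card (edges_between E B1 B2)"
  let ?m = "max (sw E B1) (sw E B2)"
  have F2sub: "F2 k \<subseteq> B2" if "k \<le> n2" for k using sweepout_sub[OF F2(1)] that n2_def by simp
  have F1sub: "F1 k \<subseteq> B1" if "k \<le> n1" for k using sweepout_sub[OF F1(1)] that n1_def by simp
  have fe: "finite (edges_between E B1 B2)" using edges_finite f1 f2 by blast
  have sweep: "sweepout A F"
    unfolding sweepout_def
  proof (intro conjI allI impI)
    show "F 0 = {}" using F1(1) unfolding F_def sweepout_def by simp
    show "F (card A) = A"
    proof (cases "n2 = 0")
      case True
      then have "B2 = {}" using f2 n2_def by simp
      then show ?thesis using F1(1) U True cA unfolding F_def sweepout_def n1_def by simp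
    next
      case False
      then show ?thesis using F2(1) U cA unfolding F_def sweepout_def n2_def by simp
    qed
    fix j
    show "j < card A \<Longrightarrow> F j \<subseteq> F (Suc j)"
    proof -
      assume j: "j < card A"
      show ?thesis
      proof (cases "Suc j \<le> n1")
        case True
        then show ?thesis using F1(1) unfolding F_def sweepout_def n1_def by simp
      next
        case False
        show ?thesis
        proof (cases "j \<le> n1")
          case True
          then have "j = n1" using False by simp
          then show ?thesis using F1(1) unfolding F_def sweepout_def n1_def by auto
        next
          case False
          then have "j - n1 < card B2" using j cA n2_def by simp
          then have "F2 (j - n1) \<subseteq> F2 (Suc (j - n1))" using F2(1) unfolding sweepout_def by simp
          moreover have "Suc j - n1 = Suc (j - n1)" using False by simp
          ultimately show ?thesis using False unfolding F_def by auto
        qed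
      qed
    qed
    show "j \<le> card A \<Longrightarrow> card (F j) = j"
    proof -
      assume j: "j \<le> card A"
      show ?thesis
      proof (cases "j \<le> n1")
        case True
        then show ?thesis using F1(1) unfolding F_def sweepout_def n1_def by simp
      next
        case False
        have k: "j - n1 \<le> n2" using j cA by simp
        have "F2 (j - n1) \<subseteq> B2" using F2sub k by blast
        then have fin2: "finite (F2 (j - n1))" and dj: "B1 \<inter> F2 (j - n1) = {}"
          using f2 D finite_subset by blast+
        have "card (B1 \<union> F2 (j - n1)) = n1 + card (F2 (j - n1))"
          using card_Un_disjoint[OF f1 fin2 dj] n1_def by simp
        also have "card (F2 (j - n1)) = j - n1" using F2(1) k unfolding sweepout_def n2_def by simp
        finally show ?thesis using False unfolding F_def by simp
      qed
    qed
  qed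
  have "width E A F \<le> ?c + ?m"
  proof (rule width_le)
    fix j assume j: "j \<le> card A"
    show "card (edges_between E (F j) (A - F j)) \<le> ?c + ?m"
    proof (cases "j \<le> n1")
      case True
      let ?X = "F1 j"
      have X: "?X \<subseteq> B1" using F1sub True by blast
      have fX: "finite ?X" using X f1 finite_subset by blast
      have "A - ?X = (B1 - ?X) \<union> B2" using U D X by blast
      then have "edges_between E ?X (A - ?X) = edges_between E ?X (B1 - ?X) \<union> edges_between E ?X B2"
        by (simp add: edges_Un2)
      also have "\<dots> \<subseteq> edges_between E ?X (B1 - ?X) \<union> edges_between E B1 B2"
        using edges_mono[OF X, of B2 B2 E] by blast
      finally have sub: "edges_between E ?X (A - ?X) \<subseteq> edges_between E ?X (B1 - ?X) \<union> edges_between E B1 B2" .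
      have fin: "finite (edges_between E ?X (B1 - ?X) \<union> edges_between E B1 B2)"
        using edges_finite fX f1 fe by blast
      have "card (edges_between E ?X (A - ?X)) \<le> card (edges_between E ?X (B1 - ?X) \<union> edges_between E B1 B2)"
        using card_mono[OF fin sub] .
      also have "\<dots> \<le> card (edges_between E ?X (B1 - ?X)) + ?c" by (rule card_Un_le)
      also have "card (edges_between E ?X (B1 - ?X)) \<le> sw E B1"
        using width_ge[of j B1 E F1] True F1(2) n1_def by simp
      finally show ?thesis using True unfolding F_def by simp
    next
      case False
      let ?Y = "F2 (j - n1)"
      have k: "j - n1 \<le> n2" using j cA by simp
      have Y: "?Y \<subseteq> B2" using F2sub k by blast
      have fY: "finite ?Y" using Y f2 finite_subset by blast
      have "A - (B1 \<union> ?Y) = B2 - ?Y" using U D Y by blast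
      then have "edges_between E (B1 \<union> ?Y) (A - (B1 \<union> ?Y)) = edges_between E B1 (B2 - ?Y) \<union> edges_between E ?Y (B2 - ?Y)"
        by (simp add: edges_Un1)
      also have "\<dots> \<subseteq> edges_between E B1 B2 \<union> edges_between E ?Y (B2 - ?Y)"
        using edges_mono[of B1 B1 "B2 - ?Y" B2 E] by blast
      finally have sub: "edges_between E (B1 \<union> ?Y) (A - (B1 \<union> ?Y)) \<subseteq> edges_between E B1 B2 \<union> edges_between E ?Y (B2 - ?Y)" .
      have fin: "finite (edges_between E B1 B2 \<union> edges_between E ?Y (B2 - ?Y))"
        using edges_finite fY f2 fe by blast
      have "card (edges_between E (B1 \<union> ?Y) (A - (B1 \<union> ?Y))) \<le> card (edges_between E B1 B2 \<union> edges_between E ?Y (B2 - ?Y))"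
        using card_mono[OF fin sub] .
      also have "\<dots> \<le> ?c + card (edges_between E ?Y (B2 - ?Y))" by (rule card_Un_le)
      also have "card (edges_between E ?Y (B2 - ?Y)) \<le> sw E B2"
        using width_ge[of "j - n1" B2 E F2] k F2(2) n2_def by simp
      finally show ?thesis using False unfolding F_def by simp
    qed
  qed
  then show ?thesis using sw_le[OF sweep, of E] by simp
qed

theorem lemma2p5:
  fixes E :: "'a \<Rightarrow> 'a \<Rightarrow> bool" and A :: "'a set"
  assumes "\<And>u v. E u v \<Longrightarrow> E v u" and "\<And>u. \<not> E u u"
    and "finite A"
  shows "\<exists>B \<subseteq> A. real (card B) \<le> 3 * real (card A) / 4 \<and>
           enat (sw E A) \<le> Bisec E A + enat (sw E B)"
proof -
  define S where "S = {(B1, B2). B1 \<union> B2 = A \<and> B1 \<inter> B2 = {} \<and>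
        real (card A) / 4 \<le> real (card B1) \<and> real (card B1) \<le> 3 * real (card A) / 4 \<and>
        real (card A) / 4 \<le> real (card B2) \<and> real (card B2) \<le> 3 * real (card A) / 4}"
  define V where "V = (\<lambda>P. enat (card (edges_between E (fst P) (snd P)))) ` S"
  have bis: "Bisec E A = Inf V" unfolding Bisec_def V_def S_def by simp
  show ?thesis
  proof (cases "S = {}")
    case True
    then have "Bisec E A = \<infinity>" using bis V_def by (simp add: top_enat_def)
    then show ?thesis by (intro exI[of _ "{}"]) auto
  next
    case False
    then have "V \<noteq> {}" using V_def by simp
    then have "Inf V \<in> V" unfolding Inf_enat_def by (auto intro: LeastI)
    then obtain B1 B2 where P: "(B1, B2) \<in> S" and b: "Bisec E A = enat (card (edges_between E B1 B2))"
      using bis V_def by auto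
    from P have U: "B1 \<union> B2 = A" and D: "B1 \<inter> B2 = {}"
      and s1: "real (card B1) \<le> 3 * real (card A) / 4" and s2: "real (card B2) \<le> 3 * real (card A) / 4"
      unfolding S_def by auto
    have c: "sw E A \<le> card (edges_between E B1 B2) + max (sw E B1) (sw E B2)"
      using combine[OF assms(3) U D] .
    show ?thesis
    proof (cases "sw E B2 \<le> sw E B1")
      case True
      then show ?thesis using c b s1 U by (intro exI[of _ B1]) (auto simp: max_def)
    next
      case False
      then show ?thesis using c b s2 U by (intro exI[of _ B2]) (auto simp: max_def)
    qed
  qed
qed

end
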